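(* Let $h\in\mathbb{Q}[x]$ be a nonzero $t$-sparse polynomial with nonzero constant term, written $h=a_1+a_2x^{d_2}+\cdots+a_tx^{d_t}$ with $0<d_2<\cdots<d_t$. Suppose the complete factorization of $h$ over $\mathbb{Q}[x]$ is $h=a_th_1^{e_1}\cdots h_k^{e_k}$, with each $h_i$ monic and irreducible and the $h_i$ distinct. Then $\max_i e_i\le t-1$.
   Context: A polynomial is $t$-sparse if it has at most $t$ nonzero coefficients in the power basis. *)

theory Defs
  imports "HOL-Computational_Algebra.Computational_Algebra"
begin

definition sparse :: "nat \<Rightarrow> 'a::zero poly \<Rightarrow> bool" where
  "sparse t p \<longleftrightarrow> card {i. coeff p i \<noteq> 0} \<le> t"

end

theory Submission
  imports Defs
begin

fun E :: "nat list \<Rightarrow> rat poly \<Rightarrow> rat poly" where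
  "E [] f = f"
| "E (d#ds) f = pCons 0 (pderiv (E ds f)) - smult (of_nat d) (E ds f)"

lemma coeff_E: "coeff (E ds f) n = (\<Prod>d\<leftarrow>ds. (of_nat n - of_nat d)) * coeff f n"
proof (induction ds)
  case Nil then show ?case by simp
next
  case (Cons d ds)
  have "coeff (pCons 0 (pderiv (E ds f))) n = of_nat n * coeff (E ds f) n"
    by (cases n) (simp_all add: coeff_pderiv coeff_pCons)
  then show ?case using Cons by (simp add: algebra_simps)
qed

lemma dvd_E1:
  fixes p f :: "rat poly"
  assumes "p ^ Suc m dvd f"
  shows "p ^ m dvd pCons 0 (pderiv f) - smult (of_nat d) f"
proof -
  obtain g where g: "f = p ^ Suc m * g" using assms by blast
  have e: "pderiv f = pderiv (p ^ Suc m) * g + p ^ Suc m * pderiv g"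
    unfolding g by (simp only: pderiv_mult add.commute mult.commute)
  have "p ^ m dvd pderiv (p ^ Suc m)" unfolding pderiv_power_Suc
    by (simp add: dvd_smult)
  moreover have "p ^ m dvd p ^ Suc m" by (simp add: le_imp_power_dvd)
  ultimately have "p ^ m dvd pderiv f" unfolding e by (simp add: dvd_add)
  hence a: "p ^ m dvd pCons 0 (pderiv f)"
  proof -
    have "pCons 0 (pderiv f) = [:0, 1:] * pderiv f" by simp
    with \<open>p ^ m dvd pderiv f\<close> show ?thesis by (metis dvd_mult)
  qed
  have "p ^ m dvd f" using assms le_imp_power_dvd[of m "Suc m" p] by (meson dvd_trans le_Suc_eq order_refl)
  hence "p ^ m dvd smult (of_nat d) f" by (simp add: dvd_smult)
  with a show ?thesis by (rule dvd_diff)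
qed

lemma dvd_E:
  fixes p f :: "rat poly"
  shows "p ^ (m + length ds) dvd f \<Longrightarrow> p ^ m dvd E ds f"
proof (induction ds arbitrary: m)
  case Nil then show ?case by simp
next
  case (Cons d ds)
  have "p ^ (Suc m + length ds) dvd f" using Cons.prems by simp
  hence "p ^ Suc m dvd E ds f" by (rule Cons.IH)
  then show ?case by (simp add: dvd_E1)
qed

theorem lemma4p1:
  fixes h :: "rat poly" and t k :: nat
    and hs :: "nat \<Rightarrow> rat poly" and es :: "nat \<Rightarrow> nat"
  assumes "h \<noteq> 0"
    and "sparse t h"
    and "coeff h 0 \<noteq> 0"
    and "h = smult (lead_coeff h) (\<Prod>i<k. hs i ^ es i)"
    and "inj_on hs {..<k}"
    and "\<And>i. i < k \<Longrightarrow> lead_coeff (hs i) = 1 \<and> irreducible (hs i) \<and> es i \<ge> 1"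
  shows "\<forall>i<k. es i \<le> t - 1"
proof (intro allI impI, rule ccontr)
  fix i assume ik: "i < k" and nle: "\<not> es i \<le> t - 1"
  define S where "S = {i. coeff h i \<noteq> 0}"
  have finS: "finite S" unfolding S_def
    by (rule finite_subset[of _ "{..degree h}"]) (auto intro: le_degree)
  have cS: "card S \<le> t" using assms(2) unfolding sparse_def S_def by simp
  have "0 \<in> S" using assms(3) by (simp add: S_def)
  hence cpos: "card S \<ge> 1" using finS by (metis card_0_eq empty_iff less_one not_le)
  define T where "T = S - {0}"
  define ds where "ds = sorted_list_of_set T"
  have finT: "finite T" using finS by (simp add: T_def)
  have setds: "set ds = T" using finT by (simp add: ds_def)
  have lends: "length ds = card T" by (simp add: ds_def)
  have cT: "card T = card S - 1" using \<open>0 \<in> S\<close> finS by (simp add: T_def)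
  have esi: "es i \<ge> 1 + length ds" using nle cS cpos lends cT by linarith
  define p where "p = hs i"
  have irr: "irreducible p" using assms(6)[OF ik] by (simp add: p_def)
  have "p ^ es i dvd (\<Prod>i<k. hs i ^ es i)" unfolding p_def
    by (rule dvd_prodI) (use ik in auto)
  hence "p ^ es i dvd h" using assms(4) by (metis dvd_smult)
  hence "p ^ (1 + length ds) dvd h" using esi by (meson dvd_trans le_imp_power_dvd)
  hence dv: "p ^ 1 dvd E ds h" by (rule dvd_E)
  define c where "c = (\<Prod>d\<leftarrow>ds. (0 - of_nat d :: rat)) * coeff h 0"
  have "0 \<notin> set ds" using setds by (simp add: T_def)
  hence "(\<Prod>d\<leftarrow>ds. (0 - of_nat d :: rat)) \<noteq> 0"
    by (induction ds) auto
  hence c0: "c \<noteq> 0" using assms(3) by (simp add: c_def)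
  have "E ds h = [:c:]"
  proof (rule poly_eqI)
    fix n
    show "coeff (E ds h) n = coeff [:c:] n"
    proof (cases "n = 0")
      case True then show ?thesis by (simp add: coeff_E c_def)
    next
      case False
      show ?thesis
      proof (cases "n \<in> S")
        case True
        hence "n \<in> set ds" using False setds by (simp add: T_def)
        hence "(\<Prod>d\<leftarrow>ds. (of_nat n - of_nat d :: rat)) = 0"
          by (induction ds) auto
        then show ?thesis using False by (simp add: coeff_E coeff_pCons split: nat.split)
      next
        case f2: False
        hence "coeff h n = 0" by (simp add: S_def)
        then show ?thesis using False by (simp add: coeff_E coeff_pCons split: nat.split)
      qed
    qed
  qed
  hence "p dvd [:c:]" using dv by simp
  moreover have "is_unit [:c:]" using c0 by (simp add: is_unit_const_poly_iff dvd_field_iff)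
  ultimately have "is_unit p" by (rule dvd_unit_imp_unit)
  with irr show False by (simp add: irreducible_def)
qed

end
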